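(* Let $M=\mathbb{CP}^2\#k\overline{\mathbb{CP}^2}$ with $k\ge1$ and $A\in H_2(M;\mathbb Z)$ with $A\cdot A=-4$. Then, up to $D(M)$-equivalence, either $A$ is a reduced class (which can occur only when $k\ge3$), or $A$ is one of $-H+2E_1-E_2$, $2E_1$, $2(H-E_1-E_2)$, $H-E_1-\cdots-E_5$.
   Context: $\{H,E_1,\dots,E_k\}$ is the standard basis of $H_2(M;\mathbb Z)$ ($H^2=1$, $E_i^2=-1$, pairwise orthogonal). $D(M)$ is the group of automorphisms of $H_2(M;\mathbb Z)$ induced by orientation-preserving diffeomorphisms of $M$; $A,B$ are $D(M)$-equivalent if $\sigma(A)=B$ for some $\sigma\in D(M)$. A class $A=aH-\sum_{i=1}^k b_iE_i$ is reduced if $b_1\ge b_2\ge\cdots\ge b_k\ge0$ and $a\ge b_1+b_2+b_3$. *)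

theory Defs
  imports Main
begin

text \<open>A homology class A = a H - (sum over i=1..k of b_i E_i) in H_2(M;Z),
  M = CP^2 # k (-CP^2), is represented by the pair (a, b) with b :: nat => int,
  where b 0 = 0 and b i = 0 for i > k.\<close>

type_synonym cls = "int \<times> (nat \<Rightarrow> int)"

definition valid :: "nat \<Rightarrow> cls \<Rightarrow> bool" where
  "valid k x \<longleftrightarrow> snd x 0 = 0 \<and> (\<forall>i>k. snd x i = 0)"

definition ip :: "nat \<Rightarrow> cls \<Rightarrow> cls \<Rightarrow> int" where
  "ip k x y = fst x * fst y - (\<Sum>i=1..k. snd x i * snd y i)"

definition clsH :: cls where "clsH = (1, \<lambda>_. 0)"
definition clsE :: "nat \<Rightarrow> cls" where "clsE i = (0, \<lambda>j. if j = i then -1 else 0)"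

definition cadd :: "cls \<Rightarrow> cls \<Rightarrow> cls" where
  "cadd x y = (fst x + fst y, \<lambda>i. snd x i + snd y i)"
definition csmul :: "int \<Rightarrow> cls \<Rightarrow> cls" where
  "csmul c x = (c * fst x, \<lambda>i. c * snd x i)"
definition csub :: "cls \<Rightarrow> cls \<Rightarrow> cls" where
  "csub x y = cadd x (csmul (-1) y)"

text \<open>Reflection in a class v (used for v.v in {1,-1,-2}, where it is integral):
  x |-> x - (2 (x.v)/(v.v)) v.\<close>
definition refl :: "nat \<Rightarrow> cls \<Rightarrow> cls \<Rightarrow> cls" where
  "refl k v x = cadd x (csmul (- ((2 * ip k x v) div ip k v v)) v)"

text \<open>Reflections in classes represented by embedded spheres of square +1, -1, -2 in M;
  these are induced by orientation-preserving diffeomorphisms, hence lie in D(M).\<close>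
definition sphere_refl :: "nat \<Rightarrow> (cls \<Rightarrow> cls) \<Rightarrow> bool" where
  "sphere_refl k \<sigma> \<longleftrightarrow> (\<exists>v. \<sigma> = refl k v \<and>
     (v = clsH
      \<or> (\<exists>i. 1 \<le> i \<and> i \<le> k \<and> v = clsE i)
      \<or> (\<exists>i j. 1 \<le> i \<and> i \<le> k \<and> 1 \<le> j \<and> j \<le> k \<and> i \<noteq> j \<and> v = csub (clsE i) (clsE j))
      \<or> (\<exists>i j. 1 \<le> i \<and> i \<le> k \<and> 1 \<le> j \<and> j \<le> k \<and> i \<noteq> j \<and>
            v = csub (csub clsH (clsE i)) (clsE j))
      \<or> (\<exists>i j l. 1 \<le> i \<and> i \<le> k \<and> 1 \<le> j \<and> j \<le> k \<and> 1 \<le> l \<and> l \<le> k \<and>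
            i \<noteq> j \<and> i \<noteq> l \<and> j \<noteq> l \<and>
            v = csub (csub (csub clsH (clsE i)) (clsE j)) (clsE l))))"

definition reduced :: "nat \<Rightarrow> cls \<Rightarrow> bool" where
  "reduced k x \<longleftrightarrow>
     (\<forall>i j. 1 \<le> i \<longrightarrow> i \<le> j \<longrightarrow> j \<le> k \<longrightarrow> snd x j \<le> snd x i) \<and>
     (\<forall>i. 1 \<le> i \<longrightarrow> i \<le> k \<longrightarrow> 0 \<le> snd x i) \<and>
     fst x \<ge> snd x 1 + snd x 2 + snd x 3"

definition cls_A1 :: cls where  (* -H + 2E_1 - E_2 *)
  "cls_A1 = (-1, \<lambda>i. if i = 1 then -2 else if i = 2 then 1 else 0)"
definition cls_A2 :: cls where  (* 2E_1 *)
  "cls_A2 = (0, \<lambda>i. if i = 1 then -2 else 0)"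
definition cls_A3 :: cls where  (* 2(H - E_1 - E_2) *)
  "cls_A3 = (2, \<lambda>i. if i = 1 \<or> i = 2 then 2 else 0)"
definition cls_A4 :: cls where  (* H - E_1 - ... - E_5 *)
  "cls_A4 = (1, \<lambda>i. if 1 \<le> i \<and> i \<le> 5 then 1 else 0)"

end

theory Submission
  imports Defs
begin


lemma ip_add2: "ip k x (cadd u v) = ip k x u + ip k x v"
  unfolding ip_def cadd_def by (simp add: distrib_left sum.distrib algebra_simps)
lemma ip_add1: "ip k (cadd u v) x = ip k u x + ip k v x"
  unfolding ip_def cadd_def by (simp add: distrib_right sum.distrib algebra_simps)
lemma ip_smul2: "ip k x (csmul c v) = c * ip k x v"
  unfolding ip_def csmul_def by (simp add: sum_distrib_left algebra_simps)
lemma ip_smul1: "ip k (csmul c v) x = c * ip k v x"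
  unfolding ip_def csmul_def by (simp add: sum_distrib_left algebra_simps)
lemma ip_sub2: "ip k x (csub u v) = ip k x u - ip k x v"
  unfolding csub_def by (simp add: ip_add2 ip_smul2)
lemma ip_sub1: "ip k (csub u v) x = ip k u x - ip k v x"
  unfolding csub_def by (simp add: ip_add1 ip_smul1)
lemma snd_E: "snd (clsE i) j = (if j = i then -1 else 0)" by (simp add: clsE_def)
lemma fst_E: "fst (clsE i) = 0" by (simp add: clsE_def)
lemma fst_H: "fst clsH = 1" "snd clsH j = 0" by (simp_all add: clsH_def)
lemma fst_csub: "fst (csub u v) = fst u - fst v" "snd (csub u v) j = snd u j - snd v j"
  by (simp_all add: csub_def cadd_def csmul_def)

lemma ip_E2: assumes "1 \<le> i" "i \<le> k" shows "ip k x (clsE i) = snd x i"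
proof -
  have "(\<lambda>j. snd x j * snd (clsE i) j) = (\<lambda>j. if j = i then - snd x i else 0)"
    by (auto simp: clsE_def)
  then show ?thesis using assms unfolding ip_def fst_E by (simp only:) (simp add: assms)
qed
lemma ip_E1: assumes "1 \<le> i" "i \<le> k" shows "ip k (clsE i) x = snd x i"
proof -
  have "(\<lambda>j. snd (clsE i) j * snd x j) = (\<lambda>j. if j = i then - snd x i else 0)"
    by (auto simp: clsE_def)
  then show ?thesis using assms unfolding ip_def fst_E by (simp only:) (simp add: assms)
qed
lemma ip_H2: "ip k x clsH = fst x"
  unfolding ip_def clsH_def by simp
lemma ip_H1: "ip k clsH x = fst x"
  unfolding ip_def clsH_def by simp

lemmas ipsimps = ip_add2 ip_add1 ip_smul2 ip_smul1 ip_sub2 ip_sub1 ip_E2 ip_E1 ip_H2 ip_H1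
   snd_E fst_E fst_H fst_csub

lemma ip_cadd_smul: "ip k (cadd x (csmul c v)) (cadd x (csmul c v)) = ip k x x + 2*c*ip k x v + c^2 * ip k v v"
proof -
  have s: "ip k v x = ip k x v" unfolding ip_def by (simp add: mult.commute)
  show ?thesis by (simp add: ip_add1 ip_add2 ip_smul1 ip_smul2 s power2_eq_square algebra_simps)
qed

lemma ip_refl: assumes "ip k v v = 1 \<or> ip k v v = -1 \<or> ip k v v = -2"
  shows "ip k (refl k v x) (refl k v x) = ip k x x"
  using assms unfolding refl_def ip_cadd_smul
  by (auto simp: power2_eq_square algebra_simps)

lemma valid_refl: "valid k v \<Longrightarrow> valid k x \<Longrightarrow> valid k (refl k v x)"
  unfolding valid_def refl_def cadd_def csmul_def by simp

lemma refl_H: "refl k clsH x = (- fst x, snd x)"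
proof -
  have "ip k x clsH = fst x" "ip k clsH clsH = 1" by (simp_all add: ipsimps)
  then show ?thesis unfolding refl_def by (simp add: cadd_def csmul_def clsH_def)
qed

lemma refl_E: assumes "1\<le>i" "i\<le>k" shows "refl k (clsE i) x = (fst x, (snd x)(i := - snd x i))"
proof -
  have "ip k x (clsE i) = snd x i" "ip k (clsE i) (clsE i) = -1" using assms by (simp_all add: ipsimps)
  then show ?thesis using assms unfolding refl_def by (auto simp: cadd_def csmul_def clsE_def)
qed

lemma refl_swap: assumes "1\<le>i" "i\<le>k" "1\<le>j" "j\<le>k" "i\<noteq>j" shows
   "refl k (csub (clsE i) (clsE j)) x = (fst x, (snd x)(i := snd x j, j := snd x i))"
proof -
  have "ip k x (csub (clsE i) (clsE j)) = snd x i - snd x j" 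
    "ip k (csub (clsE i) (clsE j)) (csub (clsE i) (clsE j)) = -2" using assms by (simp_all add: ipsimps)
  then show ?thesis using assms unfolding refl_def by (auto simp: cadd_def csmul_def clsE_def csub_def)
qed

lemma refl_r2: assumes "1\<le>i" "i\<le>k" "1\<le>j" "j\<le>k" "i\<noteq>j" shows
   "refl k (csub (csub clsH (clsE i)) (clsE j)) x =
    (fst x + 2*(fst x - snd x i - snd x j),
     \<lambda>m. if m = i \<or> m = j then snd x m + 2*(fst x - snd x i - snd x j) else snd x m)"
proof -
  have "ip k x (csub (csub clsH (clsE i)) (clsE j)) = fst x - snd x i - snd x j" 
    "ip k (csub (csub clsH (clsE i)) (clsE j)) (csub (csub clsH (clsE i)) (clsE j)) = -1" using assms by (simp_all add: ipsimps)
  then show ?thesis using assms unfolding refl_def by (auto simp: cadd_def csmul_def clsE_def csub_def clsH_def fun_eq_iff)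
qed

lemma refl_crem: assumes "1\<le>i" "i\<le>k" "1\<le>j" "j\<le>k" "1\<le>l" "l\<le>k" "i\<noteq>j" "i\<noteq>l" "j\<noteq>l" shows
   "refl k (csub (csub (csub clsH (clsE i)) (clsE j)) (clsE l)) x =
    (fst x + (fst x - snd x i - snd x j - snd x l),
     \<lambda>m. if m = i \<or> m = j \<or> m = l then snd x m + (fst x - snd x i - snd x j - snd x l) else snd x m)"
proof -
  have "ip k x (csub (csub (csub clsH (clsE i)) (clsE j)) (clsE l)) = fst x - snd x i - snd x j - snd x l" 
    "ip k (csub (csub (csub clsH (clsE i)) (clsE j)) (clsE l)) (csub (csub (csub clsH (clsE i)) (clsE j)) (clsE l)) = -2" using assms by (simp_all add: ipsimps)
  then show ?thesis using assms unfolding refl_def by (auto simp: cadd_def csmul_def clsE_def csub_def clsH_def fun_eq_iff)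
qed




lemma valid_H: "valid k clsH" by (simp add: valid_def clsH_def)
lemma valid_E: "1 \<le> i \<Longrightarrow> i \<le> k \<Longrightarrow> valid k (clsE i)" by (simp add: valid_def clsE_def)
lemma valid_csub: "valid k u \<Longrightarrow> valid k v \<Longrightarrow> valid k (csub u v)"
  by (simp add: valid_def csub_def cadd_def csmul_def)

locale DM =
  fixes k :: nat and D :: "(cls \<Rightarrow> cls) set"
  assumes k1: "k \<ge> 1"
    and sr: "\<And>\<sigma>. sphere_refl k \<sigma> \<Longrightarrow> \<sigma> \<in> D"
    and cmp: "\<And>\<sigma> \<tau>. \<sigma> \<in> D \<Longrightarrow> \<tau> \<in> D \<Longrightarrow> \<sigma> \<circ> \<tau> \<in> D"
begin

definition R :: "cls \<Rightarrow> cls \<Rightarrow> bool" where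
  "R x y \<longleftrightarrow> (\<exists>\<sigma>\<in>D. \<sigma> x = y) \<and> (valid k x \<longrightarrow> valid k y \<and> ip k y y = ip k x x)"

lemma H_in: "refl k clsH \<in> D"
  by (rule sr) (unfold sphere_refl_def, rule exI[of _ clsH], simp)

lemma id_in: "id \<in> D"
proof -
  have "refl k clsH \<circ> refl k clsH = id" by (simp add: fun_eq_iff refl_H)
  then show ?thesis using cmp[OF H_in H_in] by simp
qed

lemma R_refl: "R x x" unfolding R_def using id_in by (auto intro!: bexI[of _ id])

lemma R_trans: "R x y \<Longrightarrow> R y z \<Longrightarrow> R x z"
  unfolding R_def by (metis cmp comp_apply)

lemma R_step: assumes "sphere_refl k (refl k v)" "valid k v" "ip k v v = 1 \<or> ip k v v = -1 \<or> ip k v v = -2"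
  shows "R x (refl k v x)"
  unfolding R_def using sr[OF assms(1)] valid_refl[OF assms(2)] ip_refl[OF assms(3)] by blast

lemma R_H: "R x (- fst x, snd x)"
proof -
  have "R x (refl k clsH x)" by (rule R_step) (unfold sphere_refl_def, blast, auto simp: valid_H ipsimps)
  then show ?thesis by (simp add: refl_H)
qed

lemma R_E: assumes "1 \<le> i" "i \<le> k" shows "R x (fst x, (snd x)(i := - snd x i))"
proof -
  have "R x (refl k (clsE i) x)" using assms
    by (intro R_step) (unfold sphere_refl_def, blast, auto simp: valid_E ipsimps)
  then show ?thesis using assms by (simp add: refl_E)
qed

lemma R_swap: assumes "1\<le>i" "i\<le>k" "1\<le>j" "j\<le>k" "i\<noteq>j"
  shows "R x (fst x, (snd x)(i := snd x j, j := snd x i))"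
proof -
  have "R x (refl k (csub (clsE i) (clsE j)) x)" using assms
    by (intro R_step) (unfold sphere_refl_def, blast, auto simp: valid_E valid_csub ipsimps)
  then show ?thesis using assms by (simp add: refl_swap)
qed

lemma R_r2: assumes "1\<le>i" "i\<le>k" "1\<le>j" "j\<le>k" "i\<noteq>j"
  shows "R x (fst x + 2*(fst x - snd x i - snd x j),
     \<lambda>m. if m = i \<or> m = j then snd x m + 2*(fst x - snd x i - snd x j) else snd x m)"
proof -
  have "R x (refl k (csub (csub clsH (clsE i)) (clsE j)) x)" using assms
    by (intro R_step) (unfold sphere_refl_def, blast, auto simp: valid_E valid_H valid_csub ipsimps)
  then show ?thesis using assms by (simp add: refl_r2)
qed

lemma R_crem: assumes "1\<le>i" "i\<le>k" "1\<le>j" "j\<le>k" "1\<le>l" "l\<le>k" "i\<noteq>j" "i\<noteq>l" "j\<noteq>l"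
  shows "R x (fst x + (fst x - snd x i - snd x j - snd x l),
     \<lambda>m. if m = i \<or> m = j \<or> m = l then snd x m + (fst x - snd x i - snd x j - snd x l) else snd x m)"
proof -
  have "R x (refl k (csub (csub (csub clsH (clsE i)) (clsE j)) (clsE l)) x)" using assms
    by (intro R_step) (unfold sphere_refl_def, blast, auto simp: valid_E valid_H valid_csub ipsimps)
  then show ?thesis using assms by (simp add: refl_crem)
qed

definition nonneg :: "cls \<Rightarrow> bool" where
  "nonneg y \<longleftrightarrow> (\<forall>i. 1 \<le> i \<longrightarrow> i \<le> k \<longrightarrow> 0 \<le> snd y i)"

lemma N1: "\<exists>y. R x y \<and> fst y = fst x \<and> (\<forall>i. 1 \<le> i \<longrightarrow> i \<le> m \<longrightarrow> i \<le> k \<longrightarrow> 0 \<le> snd y i)"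
proof (induction m)
  case 0
  then show ?case using R_refl by (intro exI[of _ x]) auto
next
  case (Suc m)
  then obtain y where y: "R x y" "fst y = fst x" "\<forall>i. 1 \<le> i \<longrightarrow> i \<le> m \<longrightarrow> i \<le> k \<longrightarrow> 0 \<le> snd y i" by blast
  show ?case
  proof (cases "Suc m \<le> k \<and> snd y (Suc m) < 0")
    case True
    let ?z = "(fst y, (snd y)(Suc m := - snd y (Suc m)))"
    have "R y ?z" using True by (intro R_E) auto
    then have "R x ?z" using y R_trans by blast
    moreover have "\<forall>i. 1 \<le> i \<longrightarrow> i \<le> Suc m \<longrightarrow> i \<le> k \<longrightarrow> 0 \<le> snd ?z i"
      using y(3) True by (auto simp: le_Suc_eq)
    ultimately show ?thesis using y(2) by (intro exI[of _ ?z]) auto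
  next
    case False
    then show ?thesis using y by (intro exI[of _ y]) (auto simp: le_Suc_eq)
  qed
qed

lemma N2: "nonneg x \<Longrightarrow> \<exists>y. R x y \<and> fst y = fst x \<and> nonneg y \<and>
   (\<forall>i j. 1 \<le> i \<longrightarrow> i \<le> j \<longrightarrow> j \<le> k \<longrightarrow> i \<le> m \<longrightarrow> snd y j \<le> snd y i)"
proof (induction m)
  case 0
  then show ?case using R_refl by (intro exI[of _ x]) auto
next
  case (Suc m)
  then obtain y where y: "R x y" "fst y = fst x" "nonneg y"
    "\<forall>i j. 1 \<le> i \<longrightarrow> i \<le> j \<longrightarrow> j \<le> k \<longrightarrow> i \<le> m \<longrightarrow> snd y j \<le> snd y i" by blast
  show ?case
  proof (cases "Suc m \<le> k")
    case False
    then show ?thesis using y by (intro exI[of _ y]) (auto simp: le_Suc_eq)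
  next
    case True
    define S where "S = {Suc m..k}"
    have fin: "finite (snd y ` S)" "snd y ` S \<noteq> {}" using True by (auto simp: S_def)
    obtain j0 where j0: "j0 \<in> S" "snd y j0 = Max (snd y ` S)" using Max_in[OF fin] by auto
    have mx: "\<And>j. j \<in> S \<Longrightarrow> snd y j \<le> snd y j0" using j0 fin by simp
    show ?thesis
    proof (cases "j0 = Suc m")
      case True
      have "\<forall>i j. 1 \<le> i \<longrightarrow> i \<le> j \<longrightarrow> j \<le> k \<longrightarrow> i \<le> Suc m \<longrightarrow> snd y j \<le> snd y i"
      proof (intro allI impI)
        fix i j assume h: "1 \<le> i" "i \<le> j" "j \<le> k" "i \<le> Suc m"
        show "snd y j \<le> snd y i"
        proof (cases "i \<le> m")
          case True then show ?thesis using y(4) h by auto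
        next
          case False then have "i = Suc m" using h by auto
          then show ?thesis using mx[of j] h \<open>j0 = Suc m\<close> by (auto simp: S_def)
        qed
      qed
      then show ?thesis using y by (intro exI[of _ y]) auto
    next
      case False
      let ?z = "(fst y, (snd y)(Suc m := snd y j0, j0 := snd y (Suc m)))"
      have j0r: "Suc m < j0" "j0 \<le> k" using j0(1) False by (auto simp: S_def)
      have "R y ?z" using j0r True by (intro R_swap) auto
      then have "R x ?z" using y R_trans by blast
      moreover have "nonneg ?z" using y(3) j0r True unfolding nonneg_def by auto
      moreover have "\<forall>i j. 1 \<le> i \<longrightarrow> i \<le> j \<longrightarrow> j \<le> k \<longrightarrow> i \<le> Suc m \<longrightarrow> snd ?z j \<le> snd ?z i"
      proof (intro allI impI)
        fix i j assume h: "1 \<le> i" "i \<le> j" "j \<le> k" "i \<le> Suc m"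
        show "snd ?z j \<le> snd ?z i"
        proof (cases "i \<le> m")
          case True
          have a: "snd y j \<le> snd y i" "snd y j0 \<le> snd y i" "snd y (Suc m) \<le> snd y i"
            using y(4) h True j0r by auto
          moreover have "snd ?z i = snd y i" using True j0r by simp
          moreover have "snd ?z j = snd y j \<or> snd ?z j = snd y j0 \<or> snd ?z j = snd y (Suc m)" by simp
          ultimately show ?thesis by metis
        next
          case False then have i: "i = Suc m" using h by auto
          have "snd y j \<le> snd y j0" "snd y (Suc m) \<le> snd y j0" using mx h i True by (auto simp: S_def)
          moreover have "snd ?z i = snd y j0" using i j0r by simp
          moreover have "snd ?z j = snd y j \<or> snd ?z j = snd y j0 \<or> snd ?z j = snd y (Suc m)" by simp
          ultimately show ?thesis by (metis order.refl)
        qed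
      qed
      ultimately show ?thesis using y(2) by (intro exI[of _ ?z]) auto
    qed
  qed
qed

definition sorted_c :: "cls \<Rightarrow> bool" where
  "sorted_c y \<longleftrightarrow> (\<forall>i j. 1 \<le> i \<longrightarrow> i \<le> j \<longrightarrow> j \<le> k \<longrightarrow> snd y j \<le> snd y i)"

lemma normalize: "\<exists>y. R x y \<and> fst y = \<bar>fst x\<bar> \<and> nonneg y \<and> sorted_c y"
proof -
  obtain x1 where x1: "R x x1" "fst x1 = \<bar>fst x\<bar>" "snd x1 = snd x"
  proof (cases "fst x < 0")
    case True then show ?thesis using that[of "(- fst x, snd x)"] R_H by auto
  next
    case False then show ?thesis using that[of x] R_refl by auto
  qed
  obtain x2 where x2: "R x1 x2" "fst x2 = fst x1" "\<forall>i. 1 \<le> i \<longrightarrow> i \<le> k \<longrightarrow> i \<le> k \<longrightarrow> 0 \<le> snd x2 i"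
    using N1[of x1 k] by blast
  have "nonneg x2" using x2(3) by (simp add: nonneg_def)
  then obtain y where "R x2 y" "fst y = fst x2" "nonneg y"
    "\<forall>i j. 1 \<le> i \<longrightarrow> i \<le> j \<longrightarrow> j \<le> k \<longrightarrow> i \<le> k \<longrightarrow> snd y j \<le> snd y i" using N2 by blast
  then show ?thesis using x1 x2 R_trans unfolding sorted_c_def by (intro exI[of _ y]) auto
qed

end



lemma enum3:
  fixes a b1 b2 b3 T :: int
  assumes "0 \<le> a" "0 \<le> b3" "b3 \<le> b2" "b2 \<le> b1" "3*a \<le> b1+b2+b3"
    "a*a+4 = b1*b1+b2*b2+b3*b3+T" "0 \<le> T" "b3 = 0 \<Longrightarrow> T = 0"
  shows "(a=0\<and>b1=2\<and>b2=0\<and>b3=0\<and>T=0) \<or> (a=0\<and>b1=1\<and>b2=1\<and>b3=1\<and>T=1)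
       \<or> (a=1\<and>b1=2\<and>b2=1\<and>b3=0\<and>T=0) \<or> (a=1\<and>b1=1\<and>b2=1\<and>b3=1\<and>T=2)"
proof -
  have sq: "3*(b1*b1+b2*b2+b3*b3) - (b1+b2+b3)*(b1+b2+b3) = (b1-b2)*(b1-b2)+(b1-b3)*(b1-b3)+(b2-b3)*(b2-b3)"
    by (simp add: algebra_simps)
  have p: "0 \<le> (b1-b2)*(b1-b2)+(b1-b3)*(b1-b3)+(b2-b3)*(b2-b3)" by simp
  have m: "(3*a)*(3*a) \<le> (b1+b2+b3)*(b1+b2+b3)" using assms by (intro mult_mono) auto
  have e: "(3*a)*(3*a) = 9*(a*a)" by simp
  define S where "S = b1+b2+b3"
  define Q where "Q = b1*b1+b2*b2+b3*b3"
  have 1: "S*S \<le> 3*Q" using sq p unfolding S_def Q_def by linarith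
  have 2: "9*(a*a) \<le> S*S" using m e unfolding S_def by linarith
  have 3: "Q \<le> a*a+4" using assms unfolding Q_def by linarith
  have "a*a \<le> 2" using 1 2 3 by linarith
  then have a: "a \<le> 1"
  proof -
    { assume "a \<ge> 2" then have "a*a \<ge> 2*2" by (intro mult_mono) auto
      then have False using \<open>a*a \<le> 2\<close> by simp }
    then show ?thesis by fastforce
  qed
  have "0 \<le> b2*b2" "0 \<le> b3*b3" by simp_all
  then have "b1*b1 \<le> 6" using 3 \<open>a*a\<le>2\<close> unfolding Q_def by linarith
  then have b1: "b1 \<le> 2"
  proof -
    { assume "b1 \<ge> 3" then have "b1*b1 \<ge> 3*3" by (intro mult_mono) auto
      then have False using \<open>b1*b1 \<le> 6\<close> by simp }
    then show ?thesis by fastforce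
  qed
  have "a = 0 \<or> a = 1" using a assms by linarith
  moreover have "b1 = 0 \<or> b1 = 1 \<or> b1 = 2" using b1 assms by linarith
  moreover have "b2 = 0 \<or> b2 = 1 \<or> b2 = 2" using b1 assms by linarith
  moreover have "b3 = 0 \<or> b3 = 1 \<or> b3 = 2" using b1 assms by linarith
  ultimately show ?thesis using assms by (elim disjE; simp)
qed

lemma enum2:
  fixes a b1 b2 :: int
  assumes "0 \<le> a" "0 \<le> b2" "b2 \<le> b1" "2*a \<le> b1+b2" "a*a+4 = b1*b1+b2*b2"
  shows "(a=0\<and>b1=2\<and>b2=0) \<or> (a=1\<and>b1=2\<and>b2=1) \<or> (a=2\<and>b1=2\<and>b2=2)"
proof -
  have sq: "2*(b1*b1+b2*b2) - (b1+b2)*(b1+b2) = (b1-b2)*(b1-b2)"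
    by (simp add: algebra_simps)
  have p: "0 \<le> (b1-b2)*(b1-b2)" by simp
  have m: "(2*a)*(2*a) \<le> (b1+b2)*(b1+b2)" using assms by (intro mult_mono) auto
  have e: "(2*a)*(2*a) = 4*(a*a)" by simp
  define S where "S = b1+b2"
  define Q where "Q = b1*b1+b2*b2"
  have 1: "S*S \<le> 2*Q" using sq p unfolding S_def Q_def by linarith
  have 2: "4*(a*a) \<le> S*S" using m e unfolding S_def by linarith
  have 3: "Q = a*a+4" using assms unfolding Q_def by linarith
  have "a*a \<le> 4" using 1 2 3 by linarith
  then have a: "a \<le> 2"
  proof -
    { assume "a \<ge> 3" then have "a*a \<ge> 3*3" by (intro mult_mono) auto
      then have False using \<open>a*a \<le> 4\<close> by simp }
    then show ?thesis by fastforce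
  qed
  have "0 \<le> b2*b2" by simp
  then have "b1*b1 \<le> 8" using 3 \<open>a*a\<le>4\<close> unfolding Q_def by linarith
  then have b1: "b1 \<le> 2"
  proof -
    { assume "b1 \<ge> 3" then have "b1*b1 \<ge> 3*3" by (intro mult_mono) auto
      then have False using \<open>b1*b1 \<le> 8\<close> by simp }
    then show ?thesis by fastforce
  qed
  have "a = 0 \<or> a = 1 \<or> a = 2" using a assms by linarith
  moreover have "b1 = 0 \<or> b1 = 1 \<or> b1 = 2" using b1 assms by linarith
  moreover have "b2 = 0 \<or> b2 = 1 \<or> b2 = 2" using b1 assms by linarith
  ultimately show ?thesis using assms by (elim disjE; simp)
qed

lemma k1_case:
  fixes a b1 :: int
  assumes "0 \<le> a" "a < b1" "b1 < 2*a" "a*a+4 = b1*b1"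
  shows False
proof -
  have "(a+1)*(a+1) \<le> b1*b1" using assms by (intro mult_mono) auto
  then have "a \<le> 1" using assms by (simp add: algebra_simps)
  then show False using assms by linarith
qed

lemma sum_split3: fixes f :: "nat \<Rightarrow> int" assumes "\<forall>i>k. f i = 0"
  shows "(\<Sum>i=1..k. f i) = f 1 + f 2 + f 3 + (\<Sum>i=4..k. f i)"
proof -
  have e1: "(\<Sum>i=1..k. f i) = (\<Sum>i=1..k+3. f i)"
    by (rule sum.mono_neutral_left) (use assms in auto)
  have e2: "(\<Sum>i=4..k. f i) = (\<Sum>i=4..k+3. f i)"
    by (rule sum.mono_neutral_left) (use assms in auto)
  have "(\<Sum>i=1..k+3. f i) = f 1 + (\<Sum>i=2..k+3. f i)"
    using sum.atLeast_Suc_atMost[of 1 "k+3" f] by (simp add: numeral_eq_Suc)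
  also have "(\<Sum>i=2..k+3. f i) = f 2 + (\<Sum>i=3..k+3. f i)"
    using sum.atLeast_Suc_atMost[of 2 "k+3" f] by (simp add: numeral_eq_Suc)
  also have "(\<Sum>i=3..k+3. f i) = f 3 + (\<Sum>i=4..k+3. f i)"
    using sum.atLeast_Suc_atMost[of 3 "k+3" f] by (simp add: numeral_eq_Suc)
  finally show ?thesis using e1 e2 by simp
qed




context DM begin

definition G :: "cls \<Rightarrow> bool" where
 "G y \<longleftrightarrow> (reduced k y \<and> k \<ge> 3) \<or> y = cls_A1 \<or> y = cls_A2 \<or> y = cls_A3 \<or> y = cls_A4"

lemma R_good: "R x y \<Longrightarrow> valid k x \<Longrightarrow> valid k y \<and> ip k y y = ip k x x" by (simp add: R_def)

lemma R_eq: "R x y \<Longrightarrow> y = z \<Longrightarrow> R x z" by simp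

lemma shapeE1: assumes "2 \<le> k" shows "R (1, \<lambda>i. if i=1 then 2 else if i=2 then 1 else 0) cls_A1"
proof -
  let ?b = "\<lambda>i::nat. if i=1 then 2 else if i=2 then (1::int) else 0"
  have 1: "R (1, ?b) (-1, ?b)" by (rule R_eq[OF R_H]) simp
  have 2: "R (-1, ?b) cls_A1" by (rule R_eq[OF R_E[of 1]]) (use k1 in \<open>auto simp: cls_A1_def fun_eq_iff\<close>)
  show ?thesis using R_trans[OF 1 2] .
qed

lemma shapeA2: "R (0, \<lambda>i. if i=1 then 2 else 0) cls_A2"
  by (rule R_eq[OF R_E[of 1]]) (use k1 in \<open>auto simp: cls_A2_def fun_eq_iff\<close>)

lemma shape4: assumes "4 \<le> k" shows "R (0, \<lambda>i. if 1 \<le> i \<and> i \<le> 4 then 1 else 0) cls_A1"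
proof -
  let ?y = "(0::int, \<lambda>i::nat. if 1 \<le> i \<and> i \<le> 4 then (1::int) else 0)"
  let ?z1 = "(-3::int, \<lambda>i::nat. if 1 \<le> i \<and> i \<le> 3 then -2 else if i = 4 then (1::int) else 0)"
  let ?z2 = "(-1::int, \<lambda>i::nat. if i = 3 then -2 else if i = 4 then (1::int) else 0)"
  let ?z3 = "(-1::int, \<lambda>i::nat. if i = 1 then -2 else if i = 4 then (1::int) else 0)"
  have 1: "R ?y ?z1" by (rule R_eq[OF R_crem[of 1 2 3]]) (use assms in \<open>auto simp: fun_eq_iff\<close>)
  have 2: "R ?z1 ?z2" by (rule R_eq[OF R_r2[of 1 2]]) (use assms in \<open>auto simp: fun_eq_iff\<close>)
  have 3: "R ?z2 ?z3" by (rule R_eq[OF R_swap[of 1 3]]) (use assms in \<open>auto simp: fun_eq_iff\<close>)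
  have 4: "R ?z3 cls_A1" by (rule R_eq[OF R_swap[of 2 4]]) (use assms in \<open>auto simp: fun_eq_iff cls_A1_def\<close>)
  show ?thesis using R_trans[OF R_trans[OF R_trans[OF 1 2] 3] 4] .
qed

end



context DM begin

lemma main: "\<forall>x. nat \<bar>fst x\<bar> = n \<longrightarrow> valid k x \<longrightarrow> ip k x x = -4 \<longrightarrow> (\<exists>y. R x y \<and> G y)"
proof (induction n rule: less_induct)
  case (less n)
  show ?case
  proof (intro allI impI)
    fix x assume hn: "nat \<bar>fst x\<bar> = n" and vx: "valid k x" and ix: "ip k x x = -4"
    obtain y where y: "R x y" "fst y = \<bar>fst x\<bar>" "nonneg y" "sorted_c y" using normalize by blast
    have vy: "valid k y" "ip k y y = -4" using R_good[OF y(1) vx] ix by auto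
    define a where "a = fst y"
    define b where "b = snd y"
    have yab: "y = (a,b)" by (simp add: a_def b_def)
    have a0: "0 \<le> a" using y(2) a_def by simp
    have b0: "b 0 = 0" and bk: "\<And>i. k < i \<Longrightarrow> b i = 0" using vy(1) by (auto simp: valid_def b_def)
    have bnn: "0 \<le> b i" for i
    proof -
      consider "i = 0" | "k < i" | "1 \<le> i \<and> i \<le> k" by linarith
      then show ?thesis using b0 bk y(3) by cases (auto simp: nonneg_def b_def)
    qed
    have bsort: "b j \<le> b i" if "1 \<le> i" "i \<le> j" for i j
    proof (cases "j \<le> k")
      case True then show ?thesis using y(4) that by (auto simp: sorted_c_def b_def)
    next
      case False then show ?thesis using bk[of j] bnn[of i] by simp
    qed
    have fin: "\<And>z. R y z \<Longrightarrow> G z \<Longrightarrow> \<exists>w. R x w \<and> G w" using y(1) R_trans by blast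
    have desc: "\<exists>w. R x w \<and> G w" if z: "R y z" "\<bar>fst z\<bar> < a" for z
    proof -
      have xz: "R x z" using y(1) z(1) R_trans by blast
      have gz: "valid k z" "ip k z z = -4" using R_good[OF xz vx] ix by auto
      have "nat \<bar>fst z\<bar> < n" using hn z(2) y(2) a_def by auto
      then obtain w where "R z w" "G w" using less.IH gz by blast
      then show ?thesis using R_trans xz by blast
    qed
    have ipe: "a*a - (\<Sum>i=1..k. b i * b i) = -4" using vy(2) by (simp add: ip_def a_def b_def)
    define T where "T = (\<Sum>i=4..k. b i * b i)"
    have split: "(\<Sum>i=1..k. b i * b i) = b 1 * b 1 + b 2 * b 2 + b 3 * b 3 + T"
      unfolding T_def by (rule sum_split3) (simp add: bk)
    have eq: "a*a + 4 = b 1 * b 1 + b 2 * b 2 + b 3 * b 3 + T" using ipe split by linarith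
    have T0: "0 \<le> T" unfolding T_def by (rule sum_nonneg) simp
    have tailz: "(\<Sum>i=m..k. b i * b i) = 0" if "1 \<le> m" "b m = 0" for m
    proof (rule sum.neutral, rule ballI)
      fix i assume "i \<in> {m..k}"
      then have "b i \<le> b m" "0 \<le> b i" using bsort[of m i] bnn that by auto
      then show "b i * b i = 0" using that by simp
    qed
    have tail0: "\<forall>i\<ge>m. b i = 0" if "(\<Sum>i=m..k. b i * b i) = 0" for m
    proof (intro allI impI)
      fix i assume "m \<le> i"
      show "b i = 0"
      proof (cases "i \<le> k")
        case True
        have "\<forall>j\<in>{m..k}. b j * b j = 0" using that sum_nonneg_eq_0_iff[of "{m..k}" "\<lambda>j. b j * b j"] by simp
        then show ?thesis using True \<open>m \<le> i\<close> by auto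
      next
        case False then show ?thesis using bk by simp
      qed
    qed
    have peel: "(\<Sum>i=m..k. b i * b i) = b m * b m + (\<Sum>i=Suc m..k. b i * b i)" if "m \<le> k" for m
      by (rule sum.atLeast_Suc_atMost[OF that])
    have s12: "b 2 \<le> b 1" "b 3 \<le> b 2" using bsort by auto
    show "\<exists>w. R x w \<and> G w"
    proof (cases "3 \<le> k")
      case k3: True
      show ?thesis
      proof (cases "b 1 + b 2 + b 3 \<le> a")
        case True
        have "reduced k y" unfolding reduced_def using True bsort bnn by (auto simp: a_def b_def)
        then show ?thesis using fin[OF R_refl] k3 by (auto simp: G_def)
      next
        case nr: False
        show ?thesis
        proof (cases "b 1 + b 2 + b 3 < 3*a")
          case True
          have "R y (fst y + (fst y - snd y 1 - snd y 2 - snd y 3),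
             \<lambda>m. if m = 1 \<or> m = 2 \<or> m = 3 then snd y m + (fst y - snd y 1 - snd y 2 - snd y 3) else snd y m)"
            by (rule R_crem) (use k3 in auto)
          then show ?thesis by (rule desc) (use True nr in \<open>auto simp: a_def b_def\<close>)
        next
          case False
          have e: "b 3 = 0 \<Longrightarrow> T = 0" unfolding T_def using tailz[of 4] bsort[of 3 4] bnn[of 4] by simp
          have "(a=0\<and>b 1=2\<and>b 2=0\<and>b 3=0\<and>T=0) \<or> (a=0\<and>b 1=1\<and>b 2=1\<and>b 3=1\<and>T=1)
               \<or> (a=1\<and>b 1=2\<and>b 2=1\<and>b 3=0\<and>T=0) \<or> (a=1\<and>b 1=1\<and>b 2=1\<and>b 3=1\<and>T=2)"
            by (rule enum3) (use a0 bnn s12 False eq T0 e in auto)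
          then consider "a=0" "b 1=2" "b 2=0" "b 3=0" "T=0" | "a=0" "b 1=1" "b 2=1" "b 3=1" "T=1"
            | "a=1" "b 1=2" "b 2=1" "b 3=0" "T=0" | "a=1" "b 1=1" "b 2=1" "b 3=1" "T=2" by blast
          then show ?thesis
          proof cases
            case 1
            have "(\<Sum>i=4..k. b i * b i) = 0" using 1(5) unfolding T_def .
            then have z: "\<forall>i\<ge>4. b i = 0" by (rule tail0)
            have "b = (\<lambda>i. if i=1 then 2 else 0)"
            proof
              fix i :: nat
              consider "i = 0" | "i = 1" | "i = 2" | "i = 3" | "4 \<le> i" by linarith
              then show "b i = (if i=1 then 2 else 0)" using 1 z b0 by cases auto
            qed
            then have "R y cls_A2" using shapeA2 1 yab by simp
            then show ?thesis using fin by (auto simp: G_def)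
          next
            case 2
            have "b 4 \<noteq> 0"
            proof
              assume "b 4 = 0"
              then have "T = 0" using tailz[of 4] unfolding T_def by simp
              then show False using 2 by simp
            qed
            then have k4: "4 \<le> k" using bk[of 4] by linarith
            have b4: "b 4 = 1" using \<open>b 4 \<noteq> 0\<close> bnn[of 4] bsort[of 3 4] 2(4) by simp
            have "T = b 4 * b 4 + (\<Sum>i=5..k. b i * b i)" unfolding T_def using peel[OF k4] by simp
            then have "(\<Sum>i=5..k. b i * b i) = 0" using 2(5) b4 by simp
            then have z: "\<forall>i\<ge>5. b i = 0" by (rule tail0)
            have "b = (\<lambda>i. if 1 \<le> i \<and> i \<le> 4 then 1 else 0)"
            proof
              fix i :: nat
              consider "i = 0" | "i = 1" | "i = 2" | "i = 3" | "i = 4" | "5 \<le> i" by linarith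
              then show "b i = (if 1 \<le> i \<and> i \<le> 4 then 1 else 0)" using 2 z b0 b4 by cases auto
            qed
            then have "R y cls_A1" using shape4[OF k4] 2 yab by simp
            then show ?thesis using fin by (auto simp: G_def)
          next
            case 3
            have "(\<Sum>i=4..k. b i * b i) = 0" using 3(5) unfolding T_def .
            then have z: "\<forall>i\<ge>4. b i = 0" by (rule tail0)
            have "b = (\<lambda>i. if i=1 then 2 else if i=2 then 1 else 0)"
            proof
              fix i :: nat
              consider "i = 0" | "i = 1" | "i = 2" | "i = 3" | "4 \<le> i" by linarith
              then show "b i = (if i=1 then 2 else if i=2 then 1 else 0)" using 3 z b0 by cases auto
            qed
            then have "R y cls_A1" using shapeE1 k3 3 yab by simp
            then show ?thesis using fin by (auto simp: G_def)
          next
            case 4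
            have "b 4 \<noteq> 0"
            proof
              assume "b 4 = 0"
              then have "T = 0" using tailz[of 4] unfolding T_def by simp
              then show False using 4 by simp
            qed
            then have k4: "4 \<le> k" using bk[of 4] by linarith
            have b4: "b 4 = 1" using \<open>b 4 \<noteq> 0\<close> bnn[of 4] bsort[of 3 4] 4(4) by simp
            have "T = b 4 * b 4 + (\<Sum>i=5..k. b i * b i)" unfolding T_def using peel[OF k4] by simp
            then have T5: "(\<Sum>i=5..k. b i * b i) = 1" using 4(5) b4 by simp
            have "b 5 \<noteq> 0"
            proof
              assume "b 5 = 0"
              then have "(\<Sum>i=5..k. b i * b i) = 0" using tailz[of 5] by simp
              then show False using T5 by simp
            qed
            then have k5: "5 \<le> k" using bk[of 5] by linarith
            have b5: "b 5 = 1" using \<open>b 5 \<noteq> 0\<close> bnn[of 5] bsort[of 4 5] b4 by simp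
            have "(\<Sum>i=5..k. b i * b i) = b 5 * b 5 + (\<Sum>i=6..k. b i * b i)" using peel[OF k5] by simp
            then have "(\<Sum>i=6..k. b i * b i) = 0" using T5 b5 by simp
            then have z: "\<forall>i\<ge>6. b i = 0" by (rule tail0)
            have "b = (\<lambda>i. if 1 \<le> i \<and> i \<le> 5 then 1 else 0)"
            proof
              fix i :: nat
              consider "i = 0" | "i = 1" | "i = 2" | "i = 3" | "i = 4" | "i = 5" | "6 \<le> i" by linarith
              then show "b i = (if 1 \<le> i \<and> i \<le> 5 then 1 else 0)" using 4 z b0 b4 b5 by cases auto
            qed
            then have "y = cls_A4" using 4 yab by (simp add: cls_A4_def)
            then show ?thesis using fin[OF R_refl] by (auto simp: G_def)
          qed
        qed
      qed
    next
      case k2: False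
      have b3: "b 3 = 0" using bk k2 by simp
      have T: "T = 0" unfolding T_def using k2 by simp
      have eq2: "a*a + 4 = b 1 * b 1 + b 2 * b 2" using eq b3 T by simp
      have gt: "a < b 1 + b 2"
      proof (rule ccontr)
        assume "\<not> a < b 1 + b 2"
        then have "(b 1 + b 2) * (b 1 + b 2) \<le> a * a" using bnn a0 by (intro mult_mono) auto
        moreover have "0 \<le> b 1 * b 2" using bnn by simp
        ultimately show False using eq2 by (simp add: algebra_simps)
      qed
      show ?thesis
      proof (cases "b 1 + b 2 < 2*a")
        case True
        show ?thesis
        proof (cases "k = 2")
          case k2': True
          have "R y (fst y + 2*(fst y - snd y 1 - snd y 2),
             \<lambda>m. if m = 1 \<or> m = 2 then snd y m + 2*(fst y - snd y 1 - snd y 2) else snd y m)"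
            by (rule R_r2) (use k2' in auto)
          then show ?thesis by (rule desc) (use True gt in \<open>auto simp: a_def b_def\<close>)
        next
          case False
          then have "b 2 = 0" using bk k2 k1 by simp
          then show ?thesis using k1_case[of a "b 1"] a0 gt True eq2 by simp
        qed
      next
        case False
        have "(a=0\<and>b 1=2\<and>b 2=0) \<or> (a=1\<and>b 1=2\<and>b 2=1) \<or> (a=2\<and>b 1=2\<and>b 2=2)"
          by (rule enum2) (use a0 bnn s12 False eq2 in auto)
        then consider "a=0" "b 1=2" "b 2=0" | "a=1" "b 1=2" "b 2=1" | "a=2" "b 1=2" "b 2=2" by blast
        then show ?thesis
        proof cases
          case 1
          have "b = (\<lambda>i. if i=1 then 2 else 0)"
          proof
            fix i :: nat
            consider "i = 0" | "i = 1" | "i = 2" | "3 \<le> i" by linarith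
            then show "b i = (if i=1 then 2 else 0)" using 1 bk k2 b0 by cases auto
          qed
          then have "R y cls_A2" using shapeA2 1 yab by simp
          then show ?thesis using fin by (auto simp: G_def)
        next
          case 2
          have k22: "2 \<le> k" using 2 bk[of 2] by (cases "2 \<le> k") auto
          have "b = (\<lambda>i. if i=1 then 2 else if i=2 then 1 else 0)"
          proof
            fix i :: nat
            consider "i = 0" | "i = 1" | "i = 2" | "3 \<le> i" by linarith
            then show "b i = (if i=1 then 2 else if i=2 then 1 else 0)" using 2 bk k2 b0 by cases auto
          qed
          then have "R y cls_A1" using shapeE1[OF k22] 2 yab by simp
          then show ?thesis using fin by (auto simp: G_def)
        next
          case 3
          have "b = (\<lambda>i. if i = 1 \<or> i = 2 then 2 else 0)"
          proof
            fix i :: nat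
            consider "i = 0" | "i = 1" | "i = 2" | "3 \<le> i" by linarith
            then show "b i = (if i = 1 \<or> i = 2 then 2 else 0)" using 3 bk k2 b0 by cases auto
          qed
          then have "y = cls_A3" using 3 yab by (simp add: cls_A3_def)
          then show ?thesis using fin[OF R_refl] by (auto simp: G_def)
        qed
      qed
    qed
  qed
qed

end

theorem lemma5p1:
  fixes k :: nat and A :: cls and D :: "(cls \<Rightarrow> cls) set"
  assumes "k \<ge> 1"
    and "valid k A"
    and "ip k A A = -4"
    and "\<And>\<sigma>. sphere_refl k \<sigma> \<Longrightarrow> \<sigma> \<in> D"
    and "\<And>\<sigma> \<tau>. \<sigma> \<in> D \<Longrightarrow> \<tau> \<in> D \<Longrightarrow> \<sigma> \<circ> \<tau> \<in> D"
  shows "\<exists>\<sigma>\<in>D. (reduced k (\<sigma> A) \<and> k \<ge> 3)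
                \<or> \<sigma> A = cls_A1 \<or> \<sigma> A = cls_A2 \<or> \<sigma> A = cls_A3 \<or> \<sigma> A = cls_A4"
proof -
  interpret DM k D using assms by unfold_locales auto
  obtain y where "R A y" "G y" using main assms(2,3) by blast
  then show ?thesis unfolding R_def G_def by auto
qed

end
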